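(* Let $n \geq 4$ and let $S$ be a $4$-cap free, $n$-cup free configuration. Suppose $S$ contains an $(n-1)$-cup $C$ from $x$ to $y$, an $(n-2)$-cup $C_x$ that ends with $x$, and an $(n-2)$-cup $C_y$ that starts with $y$. Then $S$ contains a pair of interweaved laced $(n-1)$-cups.
   Context: A configuration is a finite set $S$ of points with a linear order $<$ and, for every $3$-element subset, an arbitrary assignment declaring it either a cap or a cup. Points $x_1<\cdots<x_a$ form an $a$-cup (resp. $a$-cap) if every consecutive triple $\{x_{i-1},x_i,x_{i+1}\}$, $1<i<a$, is assigned cup (resp. cap); $1$- and $2$-element sets are both caps and cups. The size of a cup is its number of points; a cup $x_1\cdots x_a$ runs from (starts with) $x_1$ to (ends with) $x_a$. Two cups $C_1$, $C_2$ running from $p$ to $r$ and from $q$ to $s$ respectively are interweaved if $p<q\le r<s$. An $(n-1)$-cup $C$ from $p$ to $q$ is laced if there exist a cup $C_p$ ending with $p$ and a cup $C_q$ starting with $q$ such that $|C_p|+|C_q|=n-1$. *)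

theory Defs
  imports Main
begin

text \<open>A configuration: a finite set S of points of a linearly ordered type, together with
  a predicate cup3 deciding for each triple x < y < z whether it is a cup (cup3 x y z)
  or a cap (\<not> cup3 x y z). Only values on increasing triples matter.\<close>

definition is_cup :: "'a::linorder set \<Rightarrow> ('a \<Rightarrow> 'a \<Rightarrow> 'a \<Rightarrow> bool) \<Rightarrow> 'a list \<Rightarrow> bool" where
  "is_cup S cup3 xs \<longleftrightarrow> sorted_wrt (<) xs \<and> set xs \<subseteq> S \<and>
     (\<forall>i. i + 2 < length xs \<longrightarrow> cup3 (xs ! i) (xs ! (i+1)) (xs ! (i+2)))"

definition is_cap :: "'a::linorder set \<Rightarrow> ('a \<Rightarrow> 'a \<Rightarrow> 'a \<Rightarrow> bool) \<Rightarrow> 'a list \<Rightarrow> bool" where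
  "is_cap S cup3 xs \<longleftrightarrow> sorted_wrt (<) xs \<and> set xs \<subseteq> S \<and>
     (\<forall>i. i + 2 < length xs \<longrightarrow> \<not> cup3 (xs ! i) (xs ! (i+1)) (xs ! (i+2)))"

definition cap_free :: "nat \<Rightarrow> 'a::linorder set \<Rightarrow> ('a \<Rightarrow> 'a \<Rightarrow> 'a \<Rightarrow> bool) \<Rightarrow> bool" where
  "cap_free a S cup3 \<longleftrightarrow> \<not> (\<exists>xs. is_cap S cup3 xs \<and> length xs = a)"

definition cup_free :: "nat \<Rightarrow> 'a::linorder set \<Rightarrow> ('a \<Rightarrow> 'a \<Rightarrow> 'a \<Rightarrow> bool) \<Rightarrow> bool" where
  "cup_free a S cup3 \<longleftrightarrow> \<not> (\<exists>xs. is_cup S cup3 xs \<and> length xs = a)"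

definition interweaved :: "'a::linorder list \<Rightarrow> 'a list \<Rightarrow> bool" where
  "interweaved C1 C2 \<longleftrightarrow> C1 \<noteq> [] \<and> C2 \<noteq> [] \<and>
     hd C1 < hd C2 \<and> hd C2 \<le> last C1 \<and> last C1 < last C2"

definition laced :: "nat \<Rightarrow> 'a::linorder set \<Rightarrow> ('a \<Rightarrow> 'a \<Rightarrow> 'a \<Rightarrow> bool) \<Rightarrow> 'a list \<Rightarrow> bool" where
  "laced n S cup3 C \<longleftrightarrow> is_cup S cup3 C \<and> length C = n - 1 \<and> C \<noteq> [] \<and>
     (\<exists>Cp Cq. is_cup S cup3 Cp \<and> is_cup S cup3 Cq \<and> Cp \<noteq> [] \<and> Cq \<noteq> [] \<and>
        last Cp = hd C \<and> hd Cq = last C \<and> length Cp + length Cq = n - 1)"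

end

theory Submission
  imports Defs
begin

lemma cup_nth_less: "is_cup S f xs \<Longrightarrow> i < j \<Longrightarrow> j < length xs \<Longrightarrow> xs!i < xs!j"
  by (simp add: is_cup_def sorted_wrt_iff_nth_less)

lemma cup_nth_in: "is_cup S f xs \<Longrightarrow> i < length xs \<Longrightarrow> xs!i \<in> S"
  unfolding is_cup_def using nth_mem by blast

lemma cup_tri: "is_cup S f xs \<Longrightarrow> i+2 < length xs \<Longrightarrow> f (xs!i) (xs!(i+1)) (xs!(i+2))"
  unfolding is_cup_def by blast

lemma cup_single: "p \<in> S \<Longrightarrow> is_cup S f [p]"
  unfolding is_cup_def by simp

lemma cup_ConsI:
  assumes "p \<in> S" "is_cup S f xs" "xs \<noteq> [] \<Longrightarrow> p < hd xs"
    "2 \<le> length xs \<Longrightarrow> f p (xs!0) (xs!1)"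
  shows "is_cup S f (p#xs)"
proof -
  have s: "sorted_wrt (<) xs" "set xs \<subseteq> S"
    and t: "\<And>i. i + 2 < length xs \<Longrightarrow> f (xs ! i) (xs ! (i+1)) (xs ! (i+2))"
    using assms(2) unfolding is_cup_def by auto
  have "\<forall>z\<in>set xs. p < z"
  proof
    fix z assume z: "z \<in> set xs"
    then have ne: "xs \<noteq> []" by auto
    then obtain h tl' where xs: "xs = h # tl'" by (cases xs) auto
    have "h \<le> z" using z s(1) xs by auto
    moreover have "p < h" using assms(3)[OF ne] xs by simp
    ultimately show "p < z" by simp
  qed
  moreover have "\<forall>i. i + 2 < length (p#xs) \<longrightarrow> f ((p#xs) ! i) ((p#xs) ! (i+1)) ((p#xs) ! (i+2))"
  proof (intro allI impI)
    fix i assume i: "i + 2 < length (p#xs)"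
    show "f ((p#xs) ! i) ((p#xs) ! (i+1)) ((p#xs) ! (i+2))"
    proof (cases i)
      case 0
      then show ?thesis using assms(4) i by simp
    next
      case (Suc j)
      then show ?thesis using t[of j] i by simp
    qed
  qed
  ultimately show ?thesis using s assms(1) unfolding is_cup_def by simp
qed

lemma cup_snocI:
  assumes "is_cup S f xs" "p \<in> S" "xs \<noteq> [] \<Longrightarrow> last xs < p"
    "2 \<le> length xs \<Longrightarrow> f (xs!(length xs - 2)) (xs!(length xs - 1)) p"
  shows "is_cup S f (xs@[p])"
proof -
  have s: "sorted_wrt (<) xs" "set xs \<subseteq> S"
    and t: "\<And>i. i + 2 < length xs \<Longrightarrow> f (xs ! i) (xs ! (i+1)) (xs ! (i+2))"
    using assms(1) unfolding is_cup_def by auto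
  have "\<forall>z\<in>set xs. z < p"
  proof
    fix z assume z: "z \<in> set xs"
    then have ne: "xs \<noteq> []" by auto
    obtain i where i: "i < length xs" "z = xs!i" using z by (metis in_set_conv_nth)
    have "z \<le> last xs"
    proof (cases "i = length xs - 1")
      case True then show ?thesis using i ne by (simp add: last_conv_nth)
    next
      case False then have "xs!i < xs!(length xs - 1)" using s(1) i
        by (simp add: sorted_wrt_iff_nth_less)
      then show ?thesis using i ne by (simp add: last_conv_nth)
    qed
    then show "z < p" using assms(3)[OF ne] by simp
  qed
  moreover have "\<forall>i. i + 2 < length (xs@[p]) \<longrightarrow> f ((xs@[p]) ! i) ((xs@[p]) ! (i+1)) ((xs@[p]) ! (i+2))"
  proof (intro allI impI)
    fix i assume i: "i + 2 < length (xs@[p])"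
    show "f ((xs@[p]) ! i) ((xs@[p]) ! (i+1)) ((xs@[p]) ! (i+2))"
    proof (cases "i + 2 < length xs")
      case True
      then show ?thesis using t[of i] by (simp add: nth_append)
    next
      case False
      then have l: "i + 2 = length xs" using i by simp
      then have e: "length xs - 2 = i" "length xs - 1 = i+1" by auto
      have "f (xs!i) (xs!(i+1)) p" using assms(4)[unfolded e] l by simp
      then show ?thesis using l by (simp add: nth_append)
    qed
  qed
  ultimately show ?thesis using s assms(2) unfolding is_cup_def
    by (auto simp: sorted_wrt_append)
qed

lemma cup_take: "is_cup S f xs \<Longrightarrow> is_cup S f (take k xs)"
  unfolding is_cup_def
  by (auto simp: sorted_wrt_take dest: in_set_takeD)

lemma cup_drop: "is_cup S f xs \<Longrightarrow> is_cup S f (drop k xs)"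
proof -
  assume a: "is_cup S f xs"
  show ?thesis unfolding is_cup_def
  proof (intro conjI allI impI)
    show "sorted_wrt (<) (drop k xs)" using a by (simp add: is_cup_def sorted_wrt_drop)
    show "set (drop k xs) \<subseteq> S" using a by (auto simp: is_cup_def dest: in_set_dropD)
    fix i assume "i + 2 < length (drop k xs)"
    then show "f (drop k xs ! i) (drop k xs ! (i + 1)) (drop k xs ! (i + 2))"
      using cup_tri[OF a, of "k+i"] by (simp add: add.commute add.left_commute)
  qed
qed

lemma no4cap:
  assumes "cap_free 4 S f" "p < q" "q < r" "r < s" "p \<in> S" "q \<in> S" "r \<in> S" "s \<in> S"
    "\<not> f p q r" "\<not> f q r s"
  shows False
proof -
  have "is_cap S f [p,q,r,s]"
    unfolding is_cap_def
  proof (intro conjI allI impI)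
    show "sorted_wrt (<) [p,q,r,s]" using assms by auto
    show "set [p,q,r,s] \<subseteq> S" using assms by auto
    fix i assume "i + 2 < length [p,q,r,s]"
    then have "i = 0 \<or> i = 1" by auto
    then show "\<not> f ([p,q,r,s] ! i) ([p,q,r,s] ! (i + 1)) ([p,q,r,s] ! (i + 2))"
      using assms by auto
  qed
  then show False using assms(1) unfolding cap_free_def by force
qed

lemma nocup: "cup_free n S f \<Longrightarrow> is_cup S f xs \<Longrightarrow> length xs = n \<Longrightarrow> False"
  unfolding cup_free_def by blast


theorem lemma5p3:
  fixes S :: "'a::linorder set" and cup3 :: "'a \<Rightarrow> 'a \<Rightarrow> 'a \<Rightarrow> bool" and n :: nat
    and C Cx Cy :: "'a list"
  assumes "finite S" and "n \<ge> 4"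
    and "cap_free 4 S cup3" and "cup_free n S cup3"
    and "is_cup S cup3 C" and "length C = n - 1"
    and "is_cup S cup3 Cx" and "length Cx = n - 2" and "last Cx = hd C"
    and "is_cup S cup3 Cy" and "length Cy = n - 2" and "hd Cy = last C"
  shows "\<exists>C1 C2. laced n S cup3 C1 \<and> laced n S cup3 C2 \<and> interweaved C1 C2"
proof -
  obtain k where n: "n = k + 4" using assms(2) by (metis add.commute le_Suc_ex)
  note cf = assms(3) and uf = assms(4)
  note cC = assms(5) and cX = assms(7) and cY = assms(10)
  have lC: "length C = k+3" and lX: "length Cx = k+2" and lY: "length Cy = k+2"
    using assms n by auto
  have ne[simp]: "C \<noteq> []" "Cx \<noteq> []" "Cy \<noteq> []" using lC lX lY by auto
  have x: "Cx!(k+1) = C!0"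
  proof -
    have "last Cx = Cx!(k+1)" using lX by (simp add: last_conv_nth)
    moreover have "hd C = C!0" using lC by (simp add: hd_conv_nth)
    ultimately show ?thesis using assms(9) by simp
  qed
  have y: "Cy!0 = C!(k+2)"
  proof -
    have "last C = C!(k+2)" using lC by (simp add: last_conv_nth)
    moreover have "hd Cy = Cy!0" using lY by (simp add: hd_conv_nth)
    ultimately show ?thesis using assms(12) by simp
  qed
  have ltC: "\<And>i j. i < j \<Longrightarrow> j < k+3 \<Longrightarrow> C!i < C!j" using cup_nth_less[OF cC] lC by auto
  have ltX: "\<And>i j. i < j \<Longrightarrow> j < k+2 \<Longrightarrow> Cx!i < Cx!j" using cup_nth_less[OF cX] lX by auto
  have ltY: "\<And>i j. i < j \<Longrightarrow> j < k+2 \<Longrightarrow> Cy!i < Cy!j" using cup_nth_less[OF cY] lY by auto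
  have inC: "\<And>i. i < k+3 \<Longrightarrow> C!i \<in> S" using cup_nth_in[OF cC] lC by auto
  have inX: "\<And>i. i < k+2 \<Longrightarrow> Cx!i \<in> S" using cup_nth_in[OF cX] lX by auto
  have inY: "\<And>i. i < k+2 \<Longrightarrow> Cy!i \<in> S" using cup_nth_in[OF cY] lY by auto
  have tC: "\<And>i. i+2 < k+3 \<Longrightarrow> cup3 (C!i) (C!(i+1)) (C!(i+2))" using cup_tri[OF cC] lC by auto
  have tX: "\<And>i. i+2 < k+2 \<Longrightarrow> cup3 (Cx!i) (Cx!(i+1)) (Cx!(i+2))" using cup_tri[OF cX] lX by auto
  have tY: "\<And>i. i+2 < k+2 \<Longrightarrow> cup3 (Cy!i) (Cy!(i+1)) (Cy!(i+2))" using cup_tri[OF cY] lY by auto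
  have ax: "Cx!k < C!0" using ltX[of k "k+1"] x by simp
  have yb: "C!(k+2) < Cy!1" using ltY[of 0 1] y by simp
  have hdC: "hd C = C!0" using lC by (simp add: hd_conv_nth)
  have lastC: "last C = C!(k+2)" using lC by (simp add: last_conv_nth)
  have lastX: "last Cx = C!0" using assms(9) hdC by simp
  have cap1: "\<not> cup3 (Cx!k) (C!0) (C!1)"
  proof
    assume h: "cup3 (Cx!k) (C!0) (C!1)"
    have "is_cup S cup3 (Cx!k # C)"
      by (rule cup_ConsI) (use h inX cC ax hdC lC in auto)
    then show False by (rule nocup[OF uf]) (use lC n in simp)
  qed
  have cap2: "\<not> cup3 (C!(k+1)) (C!(k+2)) (Cy!1)"
  proof
    assume h: "cup3 (C!(k+1)) (C!(k+2)) (Cy!1)"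
    have "is_cup S cup3 (C @ [Cy!1])"
      by (rule cup_snocI) (use h inY cC yb lastC lC in \<open>auto simp: numeral_eq_Suc\<close>)
    then show False by (rule nocup[OF uf]) (use lC n in simp)
  qed
  have F3: "cup3 (C!0) (C!(k+1)) (C!(k+2))"
    using no4cap[OF cf, of "C!0" "C!(k+1)" "C!(k+2)" "Cy!1"] ltC inC inY yb cap2 by force
  have F2: "cup3 (C!0) (C!1) (C!(k+2))"
    using no4cap[OF cf, of "Cx!k" "C!0" "C!1" "C!(k+2)"] ltC inC inX ax cap1 by force
  have "\<exists>C2. laced n S cup3 C2 \<and> hd C2 = C!0 \<and> last C2 > C!(k+2)"
  proof (cases "k \<ge> 1 \<and> \<not> cup3 (C!(k+1)) (Cy!1) (Cy!2)")
    case True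
    have j: "cup3 (C!k) (C!(k+1)) (Cy!1)"
      using no4cap[OF cf, of "C!k" "C!(k+1)" "Cy!1" "Cy!2"] True ltC inC inY ltY[of 1 2] yb
        ltC[of "k+1" "k+2"] by force
    define C2 where "C2 = take (k+2) C @ [Cy!1]"
    have c2: "is_cup S cup3 C2" unfolding C2_def
      by (rule cup_snocI) (use j cup_take[OF cC] inY ltC[of "k+1" "k+2"] yb lC in
          \<open>auto simp: last_conv_nth numeral_eq_Suc\<close>)
    have l2: "length C2 = k+3" using lC by (simp add: C2_def)
    have h2: "hd C2 = C!0" using lC by (simp add: C2_def hd_append hd_conv_nth)
    have e2: "last C2 = Cy!1" by (simp add: C2_def)
    have "laced n S cup3 C2" unfolding laced_def
      apply (intro conjI)
      using c2 l2 n apply auto[3]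
      apply (rule exI[of _ Cx], rule exI[of _ "[Cy!1]"])
      using cX cup_single[OF inY[of 1]] lastX h2 e2 lX n by auto
    then show ?thesis using h2 e2 yb by auto
  next
    case False
    have j: "cup3 (C!0) (C!(k+1)) (Cy!1)"
    proof (rule ccontr)
      assume nj: "\<not> ?thesis"
      have axc: "cup3 (Cx!k) (C!0) (C!(k+1))"
        using no4cap[OF cf, of "Cx!k" "C!0" "C!(k+1)" "Cy!1"] nj ltC inC inX inY ax yb
          ltC[of "k+1" "k+2"] by force
      show False
      proof (cases "k = 0")
        case True then show False using axc cap1 by simp
      next
        case False
        have s1: "is_cup S cup3 (Cx @ [C!(k+1)])"
          by (rule cup_snocI) (use cX inC axc x ltC[of 0 "k+1"] lX lastX in \<open>auto simp: numeral_eq_Suc\<close>)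
        have "is_cup S cup3 ((Cx @ [C!(k+1)]) @ [C!(k+2)])"
          by (rule cup_snocI) (use s1 inC F3 x ltC[of "k+1" "k+2"] lX False in \<open>auto simp: nth_append numeral_eq_Suc\<close>)
        then show False by (rule nocup[OF uf]) (use lX n in simp)
      qed
    qed
    define C2 where "C2 = C!0 # C!(k+1) # drop 1 Cy"
    have d: "is_cup S cup3 (drop 1 Cy)" using cup_drop[OF cY] .
    have s1: "is_cup S cup3 (C!(k+1) # drop 1 Cy)"
      by (rule cup_ConsI) (use d inC False ltC[of "k+1" "k+2"] yb lY in \<open>auto simp: hd_drop_conv_nth numeral_eq_Suc\<close>)
    have c2: "is_cup S cup3 C2" unfolding C2_def
      by (rule cup_ConsI) (use s1 inC j ltC[of 0 "k+1"] lY in auto)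
    have l2: "length C2 = k+3" using lY by (simp add: C2_def)
    have h2: "hd C2 = C!0" by (simp add: C2_def)
    have e2: "last C2 = Cy!(k+1)" using lY by (simp add: C2_def last_conv_nth)
    have yb2: "C!(k+2) < Cy!(k+1)" using ltY[of 0 "k+1"] y by simp
    have "laced n S cup3 C2" unfolding laced_def
      apply (intro conjI)
      using c2 l2 n apply auto[3]
      apply (rule exI[of _ Cx], rule exI[of _ "[Cy!(k+1)]"])
      using cX cup_single[OF inY[of "k+1"]] lastX h2 e2 lX n by auto
    then show ?thesis using h2 e2 yb2 by auto
  qed
  then obtain C2 where C2: "laced n S cup3 C2" "hd C2 = C!0" "last C2 > C!(k+2)" by blast
  have "\<exists>C1. laced n S cup3 C1 \<and> hd C1 < C!0 \<and> last C1 = C!(k+2)"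
  proof (cases "k \<ge> 1 \<and> \<not> cup3 (Cx!(k-1)) (Cx!k) (C!1)")
    case True
    have j: "cup3 (Cx!k) (C!1) (C!2)"
      using no4cap[OF cf, of "Cx!(k-1)" "Cx!k" "C!1" "C!2"] True ltX[of "k-1" k] inX inC
        ltC[of 1 2] ltC[of 0 1] ax by force
    define C1 where "C1 = Cx!k # drop 1 C"
    have c1: "is_cup S cup3 C1" unfolding C1_def
      by (rule cup_ConsI) (use j cup_drop[OF cC] inX ltC[of 0 1] ax lC in \<open>auto simp: hd_drop_conv_nth numeral_eq_Suc\<close>)
    have l1: "length C1 = k+3" using lC by (simp add: C1_def)
    have h1: "hd C1 = Cx!k" by (simp add: C1_def)
    have e1: "last C1 = C!(k+2)" using lC by (simp add: C1_def last_conv_nth)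
    have "laced n S cup3 C1" unfolding laced_def
      apply (intro conjI)
      using c1 l1 n apply auto[3]
      apply (rule exI[of _ "[Cx!k]"], rule exI[of _ Cy])
      using cY cup_single[OF inX[of k]] y h1 e1 lY n by (auto simp: hd_conv_nth)
    then show ?thesis using h1 e1 ax by auto
  next
    case False
    have j: "cup3 (Cx!k) (C!1) (C!(k+2))"
    proof (rule ccontr)
      assume nj: "\<not> ?thesis"
      have cyb: "cup3 (C!1) (C!(k+2)) (Cy!1)"
        using no4cap[OF cf, of "Cx!k" "C!1" "C!(k+2)" "Cy!1"] nj ltC inC inX inY ax yb
          ltC[of 0 1] by force
      show False
      proof (cases "k = 0")
        case True then show False using cyb cap2 by simp
      next
        case False
        have s1: "is_cup S cup3 (C!1 # Cy)"
          by (rule cup_ConsI) (use cY inC cyb y ltC[of 1 "k+2"] lY False in \<open>auto simp: hd_conv_nth\<close>)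
        have "is_cup S cup3 (C!0 # C!1 # Cy)"
          by (rule cup_ConsI) (use s1 inC F2 y ltC[of 0 1] lY in auto)
        then show False by (rule nocup[OF uf]) (use lY n in simp)
      qed
    qed
    define C1 where "C1 = (take (k+1) Cx @ [C!1]) @ [C!(k+2)]"
    have s1: "is_cup S cup3 (take (k+1) Cx @ [C!1])"
      by (rule cup_snocI) (use cup_take[OF cX] inC False ltC[of 0 1] ax lX in
          \<open>auto simp: last_conv_nth numeral_eq_Suc\<close>)
    have c1: "is_cup S cup3 C1" unfolding C1_def
      by (rule cup_snocI) (use s1 inC j ltC[of 1 "k+2"] lX in \<open>auto simp: nth_append numeral_eq_Suc\<close>)
    have l1: "length C1 = k+3" using lX by (simp add: C1_def)
    have h1: "hd C1 = Cx!0" by (simp add: C1_def hd_append hd_conv_nth lX)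
    have e1: "last C1 = C!(k+2)" by (simp add: C1_def)
    have xa: "Cx!0 < C!0" using ltX[of 0 "k+1"] x by simp
    have "laced n S cup3 C1" unfolding laced_def
      apply (intro conjI)
      using c1 l1 n apply auto[3]
      apply (rule exI[of _ "[Cx!0]"], rule exI[of _ Cy])
      using cY cup_single[OF inX[of 0]] y h1 e1 lY n by (auto simp: hd_conv_nth)
    then show ?thesis using h1 e1 xa by auto
  qed
  then obtain C1 where C1: "laced n S cup3 C1" "hd C1 < C!0" "last C1 = C!(k+2)" by blast
  have "interweaved C1 C2"
    unfolding interweaved_def using C1 C2 ltC[of 0 "k+2"] unfolding laced_def by auto
  then show ?thesis using C1 C2 by blast
qed

end
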